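(* Let $\alpha\in(0,1)$, $a,b\in\mathbb{R}$, $\tau>0$, and $Q(s)=s^\alpha-a-b e^{-s\tau}$ (principal branch of $s^\alpha$, defined for $s\in\mathbb{C}\setminus(-\infty,0]$). For any real numbers $\rho_1\le\rho_2$, the equation $Q(s)=0$ has at most finitely many roots in the vertical strip $\{z\in\mathbb{C}:\rho_1\le \operatorname{Re}z\le\rho_2\}$.
   Context: $s^\alpha=|s|^\alpha e^{i\alpha\arg s}$ with $\arg s\in(-\pi,\pi)$. *)

theory Defs
  imports "HOL-Analysis.Analysis"
begin

text \<open>Principal branch s^alpha = |s|^alpha e^{i alpha arg s}, arg s in (-pi,pi),
  defined on the slit plane C minus (-inf,0]. Library: powr uses principal Ln.\<close>
definition slit_plane :: "complex set" where
  "slit_plane = - {z. Im z = 0 \<and> Re z \<le> 0}"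

definition Qfun :: "real \<Rightarrow> real \<Rightarrow> real \<Rightarrow> real \<Rightarrow> complex \<Rightarrow> complex" where
  "Qfun \<alpha> a b \<tau> s = s powr (complex_of_real \<alpha>) - complex_of_real a
      - complex_of_real b * exp (- s * complex_of_real \<tau>)"

end

theory Submission
  imports Defs "HOL-Complex_Analysis.Complex_Analysis"
begin

lemma exp_ihalf: "exp (\<i> * complex_of_real pi / 2) = \<i>"
  by (simp add: complex_eq_iff Re_exp Im_exp)

lemma Ln_up:
  assumes "s \<noteq> 0" "0 \<le> Im s"
  shows "Ln s = Ln (- \<i> * s) + \<i> * pi/2"
proof (rule Ln_unique)
  have nz: "-\<i> * s \<noteq> 0" using assms by auto
  show "exp (Ln (- \<i> * s) + \<i> * pi/2) = s"
    using nz by (simp add: exp_add exp_ihalf mult.commute mult.left_commute)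
  have h: "\<bar>Im (Ln (- \<i> * s))\<bar> \<le> pi/2"
    using Re_Ln_pos_le[OF nz] assms by simp
  then have h1: "- (pi/2) \<le> Im (Ln (- \<i> * s))" "Im (Ln (- \<i> * s)) \<le> pi/2"
    by (simp_all add: abs_le_iff)
  have e: "Im (Ln (- \<i> * s) + \<i> * pi/2) = Im (Ln (- \<i> * s)) + pi/2" by simp
  show "- pi < Im (Ln (- \<i> * s) + \<i> * pi/2)" 
    unfolding e using h1 pi_gt_zero by linarith
  show "Im (Ln (- \<i> * s) + \<i> * pi/2) \<le> pi"
    unfolding e using h1 pi_gt_zero by linarith
qed

lemma Ln_down:
  assumes "s \<in> slit_plane" "Im s \<le> 0"
  shows "Ln s = Ln (\<i> * s) - \<i> * pi/2"
proof (rule Ln_unique)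
  have s0: "s \<noteq> 0" using assms by (auto simp: slit_plane_def)
  have nz: "\<i> * s \<noteq> 0" using s0 by auto
  show "exp (Ln (\<i> * s) - \<i> * pi/2) = s"
    using nz by (simp add: exp_diff exp_ihalf)
  have "\<bar>Im (Ln (\<i> * s))\<bar> \<le> pi/2"
    using Re_Ln_pos_le[OF nz] assms by simp
  moreover have "- pi/2 < Im (Ln (\<i> * s))"
  proof (cases "Im s = 0")
    case True
    then have "0 < Re s" using assms by (auto simp: slit_plane_def)
    then have "0 \<le> Im (Ln (\<i> * s))" using Im_Ln_pos_le[OF nz] True by simp
    then show ?thesis using pi_gt_zero by linarith
  next
    case False
    then have "0 < Re (\<i> * s)" using assms by simp
    then show ?thesis using Re_Ln_pos_lt_imp by fastforce
  qed
  ultimately show "- pi < Im (Ln (\<i> * s) - \<i> * pi/2)" "Im (Ln (\<i> * s) - \<i> * pi/2) \<le> pi"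
    using pi_gt_zero by auto
qed


lemma norm_powr_alpha: "norm (s powr complex_of_real \<alpha>) = norm s powr \<alpha>"
  by (simp add: norm_powr_real_powr')

lemma norm_exp_tau: "norm (exp (- s * complex_of_real \<tau>)) = exp (- Re s * \<tau>)"
  by (simp add: norm_exp_eq_Re)

lemma exp_small_bound:
  fixes b \<tau> :: real
  assumes "0 < \<tau>" "norm s \<le> 1/(2*\<tau>)"
  shows "norm (complex_of_real b * (exp (- s * complex_of_real \<tau>) - 1)) \<le> 3/2*\<bar>b\<bar>*\<tau> * norm s"
proof -
  have "norm (- s * complex_of_real \<tau>) = norm s * \<tau>" using assms by (simp add: norm_mult)
  also have "\<dots> \<le> 1/2" using assms by (simp add: field_simps)
  finally have "norm (exp (- s * complex_of_real \<tau>) - 1) \<le> 3/2 * norm (- s * complex_of_real \<tau>)"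
    by (rule norm_exp_bounds(2))
  then have "norm (exp (- s * complex_of_real \<tau>) - 1) \<le> 3/2 * (norm s * \<tau>)"
    using assms by (simp add: norm_mult)
  then have "\<bar>b\<bar> * norm (exp (- s * complex_of_real \<tau>) - 1) \<le> \<bar>b\<bar> * (3/2 * (norm s * \<tau>))"
    by (rule mult_left_mono) simp
  then show ?thesis by (simp add: norm_mult mult_ac)
qed


lemma small_zero_free:
  fixes \<alpha> a b \<tau> :: real
  assumes "0 < \<alpha>" "\<alpha> < 1" "0 < \<tau>"
  shows "\<exists>r>0. \<forall>s\<in>slit_plane. Qfun \<alpha> a b \<tau> s = 0 \<longrightarrow> r \<le> norm s"
proof -
  define c where "c = 3/2*\<bar>b\<bar>*\<tau>"
  have c0: "0 \<le> c" using assms by (simp add: c_def)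
  have Qeq: "Qfun \<alpha> a b \<tau> s = s powr complex_of_real \<alpha> - complex_of_real (a+b)
      - complex_of_real b * (exp (- s * complex_of_real \<tau>) - 1)" for s
    by (simp add: Qfun_def algebra_simps)
  have eb: "norm (complex_of_real b * (exp (- s * complex_of_real \<tau>) - 1)) \<le> c * norm s"
    if "norm s \<le> 1/(2*\<tau>)" for s
    using exp_small_bound[OF assms(3) that, of b] by (simp add: c_def)
  show ?thesis
  proof (cases "a + b = 0")
    case False
    define d where "d = \<bar>a+b\<bar>"
    have d0: "0 < d" using False by (simp add: d_def)
    define r where "r = min (1/(2*\<tau>)) (min ((d/2) powr (1/\<alpha>)) (d/(2*c+1)))"
    have r0: "0 < r" using d0 c0 assms by (simp add: r_def)
    have "r \<le> norm s" if "s \<in> slit_plane" "Qfun \<alpha> a b \<tau> s = 0" for s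
    proof (rule ccontr)
      assume "\<not> r \<le> norm s"
      then have lt: "norm s < r" by simp
      have "complex_of_real (a+b) = s powr complex_of_real \<alpha>
          - complex_of_real b * (exp (- s * complex_of_real \<tau>) - 1)"
        using that(2) Qeq[of s] by (simp add: algebra_simps)
      then have "d \<le> norm (s powr complex_of_real \<alpha>)
          + norm (complex_of_real b * (exp (- s * complex_of_real \<tau>) - 1))"
        by (metis d_def norm_of_real norm_triangle_ineq4)
      also have "\<dots> \<le> norm s powr \<alpha> + c * norm s"
        using eb[of s] lt by (simp add: norm_powr_alpha r_def)
      finally have A: "d \<le> norm s powr \<alpha> + c * norm s" .
      have "norm s powr \<alpha> < r powr \<alpha>"
        using lt assms by (intro powr_less_mono2) auto
      also have "\<dots> \<le> ((d/2) powr (1/\<alpha>)) powr \<alpha>"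
        using assms r0 by (intro powr_mono2) (auto simp: r_def)
      also have "\<dots> = d/2" using assms d0 by (simp add: powr_powr)
      finally have B: "norm s powr \<alpha> < d/2" .
      have "c * norm s \<le> c * (d/(2*c+1))"
        using lt c0 by (intro mult_left_mono) (auto simp: r_def)
      also have "\<dots> \<le> d/2" using c0 d0 by (simp add: field_simps)
      finally show False using A B by linarith
    qed
    then show ?thesis using r0 by blast
  next
    case True
    define r where "r = min (1/(2*\<tau>)) ((1/(c+1)) powr (1/(1-\<alpha>)))"
    have r0: "0 < r" using c0 assms by (simp add: r_def)
    have "r \<le> norm s" if "s \<in> slit_plane" "Qfun \<alpha> a b \<tau> s = 0" for s
    proof (rule ccontr)
      assume "\<not> r \<le> norm s"
      then have lt: "norm s < r" by simp
      have s0: "s \<noteq> 0" using that(1) by (auto simp: slit_plane_def)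
      then have ns: "0 < norm s" by simp
      have "s powr complex_of_real \<alpha> = complex_of_real b * (exp (- s * complex_of_real \<tau>) - 1)"
        using that(2) Qeq[of s] True by (simp add: algebra_simps)
      then have "norm s powr \<alpha> = norm (complex_of_real b * (exp (- s * complex_of_real \<tau>) - 1))"
        by (metis norm_powr_alpha)
      moreover have "norm s \<le> 1/(2*\<tau>)" using lt by (simp add: r_def)
      ultimately have A: "norm s powr \<alpha> \<le> c * norm s"
        using eb[of s] by simp
      have "norm s powr (1-\<alpha>) < r powr (1-\<alpha>)"
        using lt assms by (intro powr_less_mono2) auto
      also have "\<dots> \<le> ((1/(c+1)) powr (1/(1-\<alpha>))) powr (1-\<alpha>)"
        using assms r0 by (intro powr_mono2) (auto simp: r_def)
      also have "\<dots> = 1/(c+1)" using assms c0 by (simp add: powr_powr)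
      finally have B: "norm s powr (1-\<alpha>) < 1/(c+1)" .
      have sp: "norm s = norm s powr \<alpha> * norm s powr (1-\<alpha>)"
        using ns by (simp add: powr_add[symmetric])
      have pa: "0 < norm s powr \<alpha>" using ns by simp
      have "c * norm s = norm s powr \<alpha> * (c * norm s powr (1-\<alpha>))"
        by (subst sp) (simp add: mult_ac)
      also have "\<dots> \<le> norm s powr \<alpha> * (c * (1/(c+1)))"
        using B c0 pa by (intro mult_left_mono) auto
      also have "\<dots> < norm s powr \<alpha>"
        using pa c0 by (simp add: field_simps)
      finally show False using A by linarith
    qed
    then show ?thesis using r0 by blast
  qed
qed


lemma large_zero_free:
  fixes \<alpha> a b \<tau> \<rho>1 :: real
  assumes "0 < \<alpha>" "0 < \<tau>" "Qfun \<alpha> a b \<tau> s = 0" "\<rho>1 \<le> Re s"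
  shows "norm s \<le> (\<bar>a\<bar> + \<bar>b\<bar> * exp (- \<rho>1 * \<tau>) + 1) powr (1/\<alpha>)"
proof (rule ccontr)
  define N where "N = \<bar>a\<bar> + \<bar>b\<bar> * exp (- \<rho>1 * \<tau>)"
  have N0: "0 \<le> N" by (simp add: N_def)
  define R where "R = (N + 1) powr (1/\<alpha>)"
  assume "\<not> norm s \<le> (\<bar>a\<bar> + \<bar>b\<bar> * exp (- \<rho>1 * \<tau>) + 1) powr (1/\<alpha>)"
  then have lt: "R < norm s" by (simp add: R_def N_def)
  have "N + 1 = R powr \<alpha>" using N0 assms by (simp add: R_def powr_powr)
  also have "\<dots> < norm s powr \<alpha>"
    using lt assms by (intro powr_less_mono2) (auto simp: R_def)
  also have "\<dots> = norm (s powr complex_of_real \<alpha>)" by (simp add: norm_powr_alpha)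
  also have "s powr complex_of_real \<alpha> = complex_of_real a + complex_of_real b * exp (- s * complex_of_real \<tau>)"
    using assms(3) by (simp add: Qfun_def algebra_simps)
  also have "norm \<dots> \<le> \<bar>a\<bar> + \<bar>b\<bar> * exp (- Re s * \<tau>)"
    by (metis norm_triangle_ineq norm_of_real norm_mult norm_exp_tau)
  also have "\<dots> \<le> N"
    using assms by (auto simp: N_def intro!: mult_left_mono)
  finally show False by simp
qed


lemma Q_nonconst:
  fixes \<alpha> a b \<tau> :: real
  assumes "0 < \<alpha>" "0 < \<tau>"
  shows "Qfun \<alpha> a b \<tau> 1 \<noteq> Qfun \<alpha> a b \<tau> (complex_of_real ((2*\<bar>b\<bar>+2) powr (1/\<alpha>)))"
proof
  define x where "x = (2*\<bar>b\<bar>+2) powr (1/\<alpha>)"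
  have x0: "0 < x" by (simp add: x_def)
  have nx: "norm (complex_of_real x powr complex_of_real \<alpha>) = 2*\<bar>b\<bar>+2"
    using assms by (simp add: norm_powr_alpha x_def powr_powr)
  have n1: "norm ((1::complex) powr complex_of_real \<alpha>) = 1"
    by (simp add: norm_powr_alpha)
  have e1: "norm (exp (- 1 * complex_of_real \<tau>)) \<le> 1"
    using assms by (simp only: norm_exp_tau) simp
  have e2: "norm (exp (- complex_of_real x * complex_of_real \<tau>)) \<le> 1"
    using assms x0 by (simp only: norm_exp_tau) simp
  assume "Qfun \<alpha> a b \<tau> 1 = Qfun \<alpha> a b \<tau> (complex_of_real x)"
  then have eq: "complex_of_real x powr complex_of_real \<alpha> - 1 powr complex_of_real \<alpha>
      = complex_of_real b * (exp (- complex_of_real x * complex_of_real \<tau>) - exp (- 1 * complex_of_real \<tau>))"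
    by (simp add: Qfun_def algebra_simps)
  have "2*\<bar>b\<bar>+2 - 1 \<le> norm (complex_of_real x powr complex_of_real \<alpha> - 1 powr complex_of_real \<alpha>)"
    using norm_triangle_ineq2[of "complex_of_real x powr complex_of_real \<alpha>" "1 powr complex_of_real \<alpha>"] nx n1
    by simp
  also have "\<dots> = \<bar>b\<bar> * norm (exp (- complex_of_real x * complex_of_real \<tau>) - exp (- 1 * complex_of_real \<tau>))"
    by (simp only: eq norm_mult norm_of_real)
  also have "\<dots> \<le> \<bar>b\<bar> * 2"
  proof (rule mult_left_mono)
    show "norm (exp (- complex_of_real x * complex_of_real \<tau>) - exp (- 1 * complex_of_real \<tau>)) \<le> 2"
      using e1 e2 norm_triangle_ineq4[of "exp (- complex_of_real x * complex_of_real \<tau>)" "exp (- 1 * complex_of_real \<tau>)"]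
      by linarith
  qed simp
  finally show False by simp
qed

lemma nonpos_Reals_image: "complex_of_real ` {..0} = \<real>\<^sub>\<le>\<^sub>0"
  by (auto simp: complex_nonpos_Reals_iff image_iff complex_eq_iff)

lemma connected_cut: "connected (- \<real>\<^sub>\<le>\<^sub>0 :: complex set)"
  using starlike_imp_connected[OF starlike_slotted_complex_plane_left[of 0]]
  by (simp add: nonpos_Reals_image)


theorem lemma3p1:
  fixes \<alpha> a b \<tau> \<rho>1 \<rho>2 :: real
  assumes "0 < \<alpha>" "\<alpha> < 1" "0 < \<tau>" "\<rho>1 \<le> \<rho>2"
  shows "finite {s \<in> slit_plane. \<rho>1 \<le> Re s \<and> Re s \<le> \<rho>2 \<and> Qfun \<alpha> a b \<tau> s = 0}"
proof -
  obtain r where r0: "r > 0" and rs: "\<forall>s\<in>slit_plane. Qfun \<alpha> a b \<tau> s = 0 \<longrightarrow> r \<le> norm s"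
    using small_zero_free[OF assms(1-3), of a b] by blast
  define R where "R = (\<bar>a\<bar> + \<bar>b\<bar> * exp (- \<rho>1 * \<tau>) + 1) powr (1/\<alpha>)"
  define Ku where "Ku = {s. \<rho>1 \<le> Re s \<and> Re s \<le> \<rho>2 \<and> 0 \<le> Im s \<and> r \<le> norm s \<and> norm s \<le> R}"
  define Kd where "Kd = {s. \<rho>1 \<le> Re s \<and> Re s \<le> \<rho>2 \<and> Im s \<le> 0 \<and> r \<le> norm s \<and> norm s \<le> R}"
  define Du where "Du = {s. - \<i> * s \<notin> \<real>\<^sub>\<le>\<^sub>0}"
  define Dd where "Dd = {s. \<i> * s \<notin> \<real>\<^sub>\<le>\<^sub>0}"
  define Gu where "Gu = (\<lambda>s. exp (complex_of_real \<alpha> * (Ln (- \<i> * s) + \<i> * pi/2))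
      - complex_of_real a - complex_of_real b * exp (- s * complex_of_real \<tau>))"
  define Gd where "Gd = (\<lambda>s. exp (complex_of_real \<alpha> * (Ln (\<i> * s) - \<i> * pi/2))
      - complex_of_real a - complex_of_real b * exp (- s * complex_of_real \<tau>))"
  have QGu: "Qfun \<alpha> a b \<tau> s = Gu s" if "s \<in> slit_plane" "0 \<le> Im s" for s
  proof -
    have "s \<noteq> 0" using that by (auto simp: slit_plane_def)
    then show ?thesis using Ln_up[OF _ that(2)] by (simp add: Qfun_def Gu_def powr_def)
  qed
  have QGd: "Qfun \<alpha> a b \<tau> s = Gd s" if "s \<in> slit_plane" "Im s \<le> 0" for s
  proof -
    have "s \<noteq> 0" using that by (auto simp: slit_plane_def)
    then show ?thesis using Ln_down[OF that] by (simp add: Qfun_def Gd_def powr_def)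
  qed
  define x2 where "x2 = complex_of_real ((2*\<bar>b\<bar>+2) powr (1/\<alpha>))"
  have x2s: "x2 \<in> slit_plane" "Im x2 = 0" by (auto simp: x2_def slit_plane_def)
  have x1s: "(1::complex) \<in> slit_plane" by (auto simp: slit_plane_def)
  have nc: "Qfun \<alpha> a b \<tau> 1 \<noteq> Qfun \<alpha> a b \<tau> x2"
    using Q_nonconst[OF assms(1,3)] by (simp add: x2_def)
  have x2u: "x2 \<in> Du" "x2 \<in> Dd" "1 \<in> Du" "1 \<in> Dd"
    by (auto simp: x2_def Du_def Dd_def complex_nonpos_Reals_iff)
  have bK: "bounded Ku" "bounded Kd"
  proof -
    have "Ku \<subseteq> cball 0 R" "Kd \<subseteq> cball 0 R" by (auto simp: Ku_def Kd_def)
    then show "bounded Ku" "bounded Kd" by (auto intro: bounded_subset[OF bounded_cball])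
  qed
  have cl: "closed {s::complex. f s \<le> g s}" if "continuous_on UNIV f" "continuous_on UNIV g" for f g :: "complex \<Rightarrow> real"
    using closed_Collect_le[OF that] .
  have cRe: "continuous_on UNIV (\<lambda>s::complex. Re s)" "continuous_on UNIV (\<lambda>s::complex. Im s)"
    "continuous_on UNIV (\<lambda>s::complex. norm s)" "\<And>c. continuous_on UNIV (\<lambda>s::complex. c::real)"
    by (auto intro!: continuous_intros)
  have c1: "closed {s::complex. \<rho>1 \<le> Re s}" "closed {s::complex. Re s \<le> \<rho>2}"
    "closed {s::complex. 0 \<le> Im s}" "closed {s::complex. Im s \<le> 0}"
    "closed {s::complex. r \<le> norm s}" "closed {s::complex. norm s \<le> R}"
    by (rule cl cRe)+
  have "Ku = {s. \<rho>1 \<le> Re s} \<inter> {s. Re s \<le> \<rho>2} \<inter> {s. 0 \<le> Im s} \<inter> {s. r \<le> norm s} \<inter> {s. norm s \<le> R}"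
       "Kd = {s. \<rho>1 \<le> Re s} \<inter> {s. Re s \<le> \<rho>2} \<inter> {s. Im s \<le> 0} \<inter> {s. r \<le> norm s} \<inter> {s. norm s \<le> R}"
    by (auto simp: Ku_def Kd_def)
  then have cK: "closed Ku" "closed Kd" using c1 by (simp_all add: closed_Int)
  have KD: "Ku \<subseteq> Du" "Kd \<subseteq> Dd"
  proof -
    have z: "x = 0" if "Re x = 0" "Im x = 0" for x :: complex using that by (simp add: complex_eq_iff)
    show "Ku \<subseteq> Du" "Kd \<subseteq> Dd"
      using r0 by (auto simp: Ku_def Kd_def Du_def Dd_def complex_nonpos_Reals_iff dest!: z)
  qed
  have oD: "open Du" "open Dd"
  proof -
    have "Du = - ((\<lambda>s. - \<i> * s) -` \<real>\<^sub>\<le>\<^sub>0)" by (auto simp: Du_def)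
    moreover have "closed ((\<lambda>s. - \<i> * s) -` (\<real>\<^sub>\<le>\<^sub>0 :: complex set))"
      by (intro continuous_closed_vimage continuous_intros) auto
    ultimately show "open Du" by auto
    have "Dd = - ((\<lambda>s. \<i> * s) -` \<real>\<^sub>\<le>\<^sub>0)" by (auto simp: Dd_def)
    moreover have "closed ((\<lambda>s. \<i> * s) -` (\<real>\<^sub>\<le>\<^sub>0 :: complex set))"
      by (intro continuous_closed_vimage continuous_intros) auto
    ultimately show "open Dd" by auto
  qed
  have cD: "connected Du" "connected Dd"
  proof -
    have "Du = (\<lambda>w. \<i> * w) ` (- \<real>\<^sub>\<le>\<^sub>0)"
    proof (intro equalityI subsetI)
      fix x assume "x \<in> Du"
      then have "- \<i> * x \<in> - \<real>\<^sub>\<le>\<^sub>0" by (simp add: Du_def)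
      moreover have "x = (\<lambda>w. \<i> * w) (- \<i> * x)" by simp
      ultimately show "x \<in> (\<lambda>w. \<i> * w) ` (- \<real>\<^sub>\<le>\<^sub>0)" by (rule rev_image_eqI)
    next
      fix x assume "x \<in> (\<lambda>w. \<i> * w) ` (- \<real>\<^sub>\<le>\<^sub>0)"
      then obtain w where "w \<notin> \<real>\<^sub>\<le>\<^sub>0" "x = \<i> * w" by auto
      then show "x \<in> Du" by (simp add: Du_def)
    qed
    moreover have "continuous_on (- \<real>\<^sub>\<le>\<^sub>0) (\<lambda>w::complex. \<i> * w)"
      by (intro continuous_intros)
    ultimately show "connected Du"
      using connected_continuous_image connected_cut by metis
    have "Dd = (\<lambda>w. - \<i> * w) ` (- \<real>\<^sub>\<le>\<^sub>0)"
    proof (intro equalityI subsetI)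
      fix x assume "x \<in> Dd"
      then have "\<i> * x \<in> - \<real>\<^sub>\<le>\<^sub>0" by (simp add: Dd_def)
      moreover have "x = (\<lambda>w. - \<i> * w) (\<i> * x)" by simp
      ultimately show "x \<in> (\<lambda>w. - \<i> * w) ` (- \<real>\<^sub>\<le>\<^sub>0)" by (rule rev_image_eqI)
    next
      fix x assume "x \<in> (\<lambda>w. - \<i> * w) ` (- \<real>\<^sub>\<le>\<^sub>0)"
      then obtain w where "w \<notin> \<real>\<^sub>\<le>\<^sub>0" "x = - \<i> * w" by auto
      then show "x \<in> Dd" by (simp add: Dd_def)
    qed
    moreover have "continuous_on (- \<real>\<^sub>\<le>\<^sub>0) (\<lambda>w::complex. - \<i> * w)"
      by (intro continuous_intros)
    ultimately show "connected Dd"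
      using connected_continuous_image connected_cut by metis
  qed
  have hu: "Gu holomorphic_on Du" unfolding Gu_def Du_def
    by (intro holomorphic_intros) auto
  have hd: "Gd holomorphic_on Dd" unfolding Gd_def Dd_def
    by (intro holomorphic_intros) auto
  have ncu: "\<not> Gu constant_on Du"
  proof
    assume "Gu constant_on Du"
    then have "Gu 1 = Gu x2" using x2u by (auto simp: constant_on_def)
    then show False using nc QGu[OF x1s] QGu[OF x2s(1)] x2s(2) by simp
  qed
  have ncd: "\<not> Gd constant_on Dd"
  proof
    assume "Gd constant_on Dd"
    then have "Gd 1 = Gd x2" using x2u by (auto simp: constant_on_def)
    then show False using nc QGd[OF x1s] QGd[OF x2s(1)] x2s(2) by simp
  qed
  have fu: "finite {z\<in>Ku. Gu z = 0}"
    by (rule holomorphic_compact_finite_zeros[OF hu oD(1) cD(1) _ KD(1) ncu])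
       (simp add: compact_eq_bounded_closed bK cK)
  have fd: "finite {z\<in>Kd. Gd z = 0}"
    by (rule holomorphic_compact_finite_zeros[OF hd oD(2) cD(2) _ KD(2) ncd])
       (simp add: compact_eq_bounded_closed bK cK)
  have "{s \<in> slit_plane. \<rho>1 \<le> Re s \<and> Re s \<le> \<rho>2 \<and> Qfun \<alpha> a b \<tau> s = 0}
      \<subseteq> {z\<in>Ku. Gu z = 0} \<union> {z\<in>Kd. Gd z = 0}"
  proof
    fix s assume s: "s \<in> {s \<in> slit_plane. \<rho>1 \<le> Re s \<and> Re s \<le> \<rho>2 \<and> Qfun \<alpha> a b \<tau> s = 0}"
    then have r1: "r \<le> norm s" using rs by auto
    have r2: "norm s \<le> R" unfolding R_def
      using s large_zero_free[OF assms(1,3), of a b s \<rho>1] by auto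
    show "s \<in> {z\<in>Ku. Gu z = 0} \<union> {z\<in>Kd. Gd z = 0}"
    proof (cases "0 \<le> Im s")
      case True
      then show ?thesis using s r1 r2 QGu[of s] by (auto simp: Ku_def)
    next
      case False
      then show ?thesis using s r1 r2 QGd[of s] by (auto simp: Kd_def)
    qed
  qed
  then show ?thesis using fu fd by (rule finite_subset[OF _ finite_UnI])
qed

end
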